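(* Consider the uncensored delayed-feedback bandit model (described in the context), with conversion rates $\theta=(\theta_1,\dots,\theta_K)\in(0,1)^K$ such that arm $1$ is the unique optimal arm ($\theta^*:=\theta_1>\theta_k$ for all $k\neq1$), and with a delay distribution having finite expectation $\mu=\mathbb{E}[D]<\infty$. Then every uniformly efficient algorithm satisfies \[ \liminf_{T\to\infty}\frac{L(T)}{\log T}\;\ge\;\sum_{k\neq 1}\frac{\theta^*-\theta_k}{d(\theta_k,\theta^* )} . \]
   Context: Delayed-feedback bandit model: there are $K$ arms with unknown conversion rates $\theta_1,\dots,\theta_K\in[0,1]$, and a known delay distribution on $\mathbb{N}=\{0,1,2,\dots\}$ with CDF $\tau_d=\mathbb{P}(D\le d)$. At each round $t=1,2,\dots$ the learner chooses an arm $A_t\in\{1,\dots,K\}$ as a function of the observations available before round $t$. This triggers $C_t\in\{0,1\}$ and $D_t\in\mathbb{N}$ which, conditionally on the past, are independent, with $C_t\sim\mathrm{Bernoulli}(\theta_{A_t})$ and $D_t$ distributed with CDF $\tau$. For $s\le t$ let $X_{s,t}=C_s\mathbf{1}\{D_s\le t-s\}$. In the uncensored model, at round $t$ the learner observes all $X_{s,t}$, $1\le s\le t$, and receives reward $Y_t=\sum_{s=1}^{t}C_s\mathbf{1}\{D_s=t-s\}$. The expected regret is $L(T)=\mathbb{E}[r^*(T)-r(T)]$ where $r(T)=\sum_{t=1}^TY_t$ and $r^*(T)$ is the cumulated reward of an oracle playing the optimal arm at every round. An algorithm is uniformly efficient if for every bandit model and every $\alpha\in(0,1)$, $L(T)/T^\alpha\to0$.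 $d(p,q)=p\log(p/q)+(1-p)\log((1-p)/(1-q))$ is the Bernoulli Kullback–Leibler divergence. *)

theory Defs
  imports "HOL-Probability.Probability"
begin

text \<open>Rounds are indexed t = 1,2,...; arms are 1..K.
  A record of round s is the triple (A_s, C_s, D_s).
  A (deterministic) policy receives the current round t, the past arms
  (s \<mapsto> A_s for 1 \<le> s < t, 0 elsewhere) and all observations available
  before round t, i.e. X_{s,t'} for 1 \<le> s \<le> t' \<le> t-1 (False elsewhere),
  and returns the arm A_t.\<close>

type_synonym policy = "nat \<Rightarrow> (nat \<Rightarrow> nat) \<Rightarrow> (nat \<Rightarrow> nat \<Rightarrow> bool) \<Rightarrow> nat"

type_synonym history = "(nat \<times> bool \<times> nat) list"

definition past_arms :: "history \<Rightarrow> nat \<Rightarrow> nat" where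
  "past_arms h s = (if 1 \<le> s \<and> s \<le> length h then fst (h ! (s - 1)) else 0)"

definition past_obs :: "history \<Rightarrow> nat \<Rightarrow> nat \<Rightarrow> bool" where
  "past_obs h s t' = (if 1 \<le> s \<and> s \<le> t' \<and> t' \<le> length h
      then (fst (snd (h ! (s - 1))) \<and> snd (snd (h ! (s - 1))) \<le> t' - s) else False)"

primrec hist :: "policy \<Rightarrow> (nat \<Rightarrow> real) \<Rightarrow> nat pmf \<Rightarrow> nat \<Rightarrow> history pmf" where
  "hist \<pi> \<theta> \<delta> 0 = return_pmf []"
| "hist \<pi> \<theta> \<delta> (Suc n) =
     bind_pmf (hist \<pi> \<theta> \<delta> n) (\<lambda>h.
       let a = \<pi> (Suc n) (past_arms h) (past_obs h) in
       bind_pmf (bernoulli_pmf (\<theta> a)) (\<lambda>c.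
       bind_pmf \<delta> (\<lambda>d. return_pmf (h @ [(a, c, d)]))))"

definition round_reward :: "history \<Rightarrow> nat \<Rightarrow> real" where
  "round_reward h t = (\<Sum>s=1..t. if fst (snd (h ! (s - 1))) \<and> snd (snd (h ! (s - 1))) = t - s
                                  then 1 else 0)"

definition cum_reward :: "history \<Rightarrow> nat \<Rightarrow> real" where
  "cum_reward h T = (\<Sum>t=1..T. round_reward h t)"

definition exp_reward :: "policy \<Rightarrow> (nat \<Rightarrow> real) \<Rightarrow> nat pmf \<Rightarrow> nat \<Rightarrow> real" where
  "exp_reward \<pi> \<theta> \<delta> T = measure_pmf.expectation (hist \<pi> \<theta> \<delta> T) (\<lambda>h. cum_reward h T)"

definition const_policy :: "nat \<Rightarrow> policy" where
  "const_policy k = (\<lambda>_ _ _. k)"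

text \<open>Expected regret L(T) = E[r*(T)] - E[r(T)], where the oracle plays an optimal
  arm at every round (its expected reward is the maximum over the constant policies).\<close>
definition regret :: "nat \<Rightarrow> policy \<Rightarrow> (nat \<Rightarrow> real) \<Rightarrow> nat pmf \<Rightarrow> nat \<Rightarrow> real" where
  "regret K \<pi> \<theta> \<delta> T =
     (MAX k \<in> {1..K}. exp_reward (const_policy k) \<theta> \<delta> T) - exp_reward \<pi> \<theta> \<delta> T"

definition valid_policy :: "nat \<Rightarrow> policy \<Rightarrow> bool" where
  "valid_policy K \<pi> \<longleftrightarrow> (\<forall>t as xs. \<pi> t as xs \<in> {1..K})"

definition uniformly_efficient :: "nat \<Rightarrow> nat pmf \<Rightarrow> policy \<Rightarrow> bool" where
  "uniformly_efficient K \<delta> \<pi> \<longleftrightarrow>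
     (\<forall>\<theta>. (\<forall>k\<in>{1..K}. 0 \<le> \<theta> k \<and> \<theta> k \<le> 1) \<longrightarrow>
       (\<forall>\<alpha>::real. 0 < \<alpha> \<and> \<alpha> < 1 \<longrightarrow>
          ((\<lambda>T. regret K \<pi> \<theta> \<delta> T / real T powr \<alpha>) \<longlonglongrightarrow> 0)))"

definition kl_bern :: "real \<Rightarrow> real \<Rightarrow> real" where
  "kl_bern p q = p * ln (p / q) + (1 - p) * ln ((1 - p) / (1 - q))"

end

theory Submission
  imports Defs "HOL-Real_Asymp.Real_Asymp"
begin

lemma integral_bind_pmf_bdd:
  fixes f :: "_ \<Rightarrow> real"
  assumes "\<And>x y. x \<in> set_pmf M \<Longrightarrow> y \<in> set_pmf (N x) \<Longrightarrow> \<bar>f y\<bar> \<le> B"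
  shows "measure_pmf.expectation (bind_pmf M N) f = measure_pmf.expectation M (\<lambda>x. measure_pmf.expectation (N x) f)"
proof -
  define g where "g y = (if y \<in> set_pmf (bind_pmf M N) then f y else 0)" for y
  have gb: "\<bar>g y\<bar> \<le> max B 0" for y unfolding g_def using assms by (auto simp: set_bind_pmf intro: order_trans[OF _ max.cobounded1])
  have "measure_pmf.expectation (bind_pmf M N) f = measure_pmf.expectation (bind_pmf M N) g"
    by (intro integral_cong_AE) (auto simp: g_def AE_measure_pmf_iff)
  also have "\<dots> = measure_pmf.expectation M (\<lambda>x. measure_pmf.expectation (N x) g)"
    unfolding measure_pmf_bind
    apply (rule integral_bind[where K="count_space UNIV" and B="max B 0" and B'=1])
    using gb measurable_measure_pmf[of N]
    by (auto simp: measure_pmf.emeasure_space_1 prob_space_imp_subprob_space measure_pmf.prob_space_axioms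
       intro: measure_pmf.finite_measure_axioms)
  also have "\<dots> = measure_pmf.expectation M (\<lambda>x. measure_pmf.expectation (N x) f)"
    by (intro integral_cong_AE) (auto simp: g_def AE_measure_pmf_iff set_bind_pmf intro!: integral_cong_AE)
  finally show ?thesis .
qed


definition act :: "policy \<Rightarrow> nat \<Rightarrow> history \<Rightarrow> nat" where
  "act \<pi> n h = \<pi> (Suc n) (past_arms h) (past_obs h)"

lemma hist_Suc': "hist \<pi> \<theta> \<delta> (Suc n) = bind_pmf (hist \<pi> \<theta> \<delta> n) (\<lambda>h.
   bind_pmf (bernoulli_pmf (\<theta> (act \<pi> n h))) (\<lambda>c. bind_pmf \<delta> (\<lambda>d. return_pmf (h @ [(act \<pi> n h, c, d)]))))"
  by (simp add: act_def Let_def)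

lemma hist_length: "h \<in> set_pmf (hist \<pi> \<theta> \<delta> n) \<Longrightarrow> length h = n"
  by (induction n arbitrary: h) (auto simp: Let_def set_bind_pmf)

lemma hist_arms:
  assumes "\<And>t as xs. \<pi> t as xs \<in> A"
  shows "h \<in> set_pmf (hist \<pi> \<theta> \<delta> n) \<Longrightarrow> x \<in> set h \<Longrightarrow> fst x \<in> A"
  using assms by (induction n arbitrary: h) (auto simp: Let_def set_bind_pmf)

lemma integrable_pmf_bdd:
  fixes f :: "_ \<Rightarrow> real"
  shows "(\<And>x. \<bar>f x\<bar> \<le> B) \<Longrightarrow> integrable (measure_pmf p) f"
  by (rule measure_pmf.integrable_const_bound[where B=B]) auto

lemma expectation_bounds:
  fixes f :: "_ \<Rightarrow> real"
  assumes "\<And>x. l \<le> f x" "\<And>x. f x \<le> u"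
  shows "l \<le> measure_pmf.expectation p f \<and> measure_pmf.expectation p f \<le> u"
proof -
  have int: "integrable (measure_pmf p) f"
    by (rule integrable_pmf_bdd[where B="\<bar>l\<bar> + \<bar>u\<bar>"]) (smt (verit) assms)
  have "measure_pmf.expectation p (\<lambda>_. l) \<le> measure_pmf.expectation p f"
    by (rule integral_mono) (use int assms in auto)
  moreover have "measure_pmf.expectation p f \<le> measure_pmf.expectation p (\<lambda>_. u)"
    by (rule integral_mono) (use int assms in auto)
  ultimately show ?thesis by simp
qed

definition stepE :: "policy \<Rightarrow> (nat \<Rightarrow> real) \<Rightarrow> nat pmf \<Rightarrow> nat \<Rightarrow> history \<Rightarrow> (history \<Rightarrow> real) \<Rightarrow> real" where
  "stepE \<pi> \<theta> \<delta> n h F = \<theta> (act \<pi> n h) * measure_pmf.expectation \<delta> (\<lambda>d. F (h @ [(act \<pi> n h, True, d)]))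
     + (1 - \<theta> (act \<pi> n h)) * measure_pmf.expectation \<delta> (\<lambda>d. F (h @ [(act \<pi> n h, False, d)]))"

lemma step_integral:
  fixes F :: "history \<Rightarrow> real"
  assumes valid: "valid_policy K \<pi>" and th: "\<forall>i\<in>{1..K}. 0 \<le> \<theta> i \<and> \<theta> i \<le> 1"
    and bd: "\<And>h. \<bar>F h\<bar> \<le> B"
  shows "measure_pmf.expectation (hist \<pi> \<theta> \<delta> (Suc n)) F
       = measure_pmf.expectation (hist \<pi> \<theta> \<delta> n) (\<lambda>h. stepE \<pi> \<theta> \<delta> n h F)"
proof -
  have a: "act \<pi> n h \<in> {1..K}" for h using valid by (simp add: valid_policy_def act_def)
  have inner: "measure_pmf.expectation (bind_pmf (bernoulli_pmf (\<theta> (act \<pi> n h))) (\<lambda>c. bind_pmf \<delta> (\<lambda>d. return_pmf (h @ [(act \<pi> n h, c, d)])))) F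
     = stepE \<pi> \<theta> \<delta> n h F" for h
    apply (subst integral_bind_pmf_bdd[where B=B])
     apply (simp add: bd)
    apply (subst integral_bind_pmf_bdd[where B=B])
     apply (simp add: bd)
    using a[of h] th by (simp add: stepE_def algebra_simps)
  show ?thesis
    unfolding hist_Suc'
    apply (subst integral_bind_pmf_bdd[where B=B])
     apply (simp add: bd)
    by (simp add: inner)
qed



definition cnt :: "nat \<Rightarrow> nat \<Rightarrow> history \<Rightarrow> real" where
  "cnt k n h = (\<Sum>s<n. if fst (h ! s) = k then 1 else 0)"

lemma cnt_nonneg: "0 \<le> cnt k n h"
  unfolding cnt_def by (intro sum_nonneg) auto

lemma cnt_le: "cnt k n h \<le> real n"
proof -
  have "cnt k n h \<le> (\<Sum>s<n. 1)" unfolding cnt_def by (intro sum_mono) auto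
  then show ?thesis by simp
qed

lemma cnt_snoc: "length h = n \<Longrightarrow> cnt k (Suc n) (h @ [x]) = cnt k n h + (if fst x = k then 1 else 0)"
  unfolding cnt_def by (simp add: nth_append)

lemma exp_strict: "y \<noteq> 0 \<Longrightarrow> 1 + y < exp (y::real)"
proof -
  assume y: "y \<noteq> 0"
  have e: "exp y = exp (y/2) * exp (y/2)" by (simp flip: exp_add)
  show ?thesis
  proof (cases "1 + y/2 \<ge> 0")
    case True
    have "(1 + y/2) * (1 + y/2) \<le> exp (y/2) * exp (y/2)"
      using exp_ge_add_one_self[of "y/2"] True by (intro mult_mono) auto
    moreover have "0 < y * y" using y by (auto simp: zero_less_mult_iff)
    moreover have "1 + y < (1 + y/2) * (1 + y/2)" using calculation(2) by (simp add: algebra_simps)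
    ultimately show ?thesis using e by linarith
  next
    case False
    then have "1 + y < 0" by simp
    then show ?thesis using exp_gt_zero[of y] by linarith
  qed
qed

lemma ln_strict: "0 < z \<Longrightarrow> z \<noteq> 1 \<Longrightarrow> ln z < z - (1::real)"
proof -
  assume z: "0 < z" "z \<noteq> 1"
  have "ln z \<noteq> 0" using z by (metis exp_ln exp_zero)
  then show ?thesis using exp_strict[of "ln z"] z by simp
qed

lemma kl_pos:
  assumes "0 < p" "p < 1" "0 < q" "q < 1" "p \<noteq> q"
  shows "0 < kl_bern p q"
proof -
  have 1: "ln (q/p) < q/p - 1" using assms by (intro ln_strict) auto
  have 2: "ln ((1-q)/(1-p)) \<le> (1-q)/(1-p) - 1" using assms by (intro ln_le_minus_one) auto
  have "p * ln (q/p) + (1-p) * ln ((1-q)/(1-p)) < p * (q/p - 1) + (1-p) * ((1-q)/(1-p) - 1)"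
    using 1 2 assms by (intro add_less_le_mono mult_strict_left_mono mult_left_mono) auto
  also have "\<dots> = 0" using assms by (simp add: field_simps)
  finally have "p * ln (q/p) + (1-p) * ln ((1-q)/(1-p)) < 0" .
  moreover have "ln (q/p) = - ln (p/q)" "ln ((1-q)/(1-p)) = - ln ((1-p)/(1-q))"
    using assms by (auto simp: ln_div)
  ultimately show ?thesis unfolding kl_bern_def by simp
qed

lemma jensen_exp:
  fixes g :: "_ \<Rightarrow> real"
  assumes bd: "\<And>x. \<bar>g x\<bar> \<le> B"
  shows "exp (measure_pmf.expectation p g) \<le> measure_pmf.expectation p (\<lambda>x. exp (g x))"
proof -
  define m where "m = measure_pmf.expectation p g"
  have ig: "integrable (measure_pmf p) g" using bd by (rule integrable_pmf_bdd)
  have eb: "\<bar>exp (g x)\<bar> \<le> exp B" for x using bd[of x] by simp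
  have ie: "integrable (measure_pmf p) (\<lambda>x. exp (g x))" using eb by (rule integrable_pmf_bdd)
  have pw: "exp m * (1 + g x - m) \<le> exp (g x)" for x
  proof -
    have "exp m * (1 + (g x - m)) \<le> exp m * exp (g x - m)"
      using exp_ge_add_one_self[of "g x - m"] by (intro mult_left_mono) auto
    moreover have "exp m * exp (g x - m) = exp (g x)" by (simp add: exp_diff)
    ultimately show ?thesis by (simp add: add_diff_eq)
  qed
  have "measure_pmf.expectation p (\<lambda>x. exp m * (1 + g x - m)) \<le> measure_pmf.expectation p (\<lambda>x. exp (g x))"
    by (rule integral_mono) (use ig ie pw in auto)
  moreover have "measure_pmf.expectation p (\<lambda>x. exp m * (1 + g x - m)) = exp m"
  proof -
    have "measure_pmf.expectation p (\<lambda>x. exp m * (1 + g x - m)) = exp m * measure_pmf.expectation p (\<lambda>x. 1 + g x - m)"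
      by simp
    also have "measure_pmf.expectation p (\<lambda>x. 1 + g x - m) = 1 + m - m"
      using ig by (simp add: Bochner_Integration.integral_diff Bochner_Integration.integral_add m_def)
    finally show ?thesis by simp
  qed
  ultimately show ?thesis by (simp add: m_def)
qed

lemma ln_concave2:
  fixes p A B :: real
  assumes "0 \<le> p" "p \<le> 1" "0 < A" "0 < B"
  shows "p * ln A + (1-p) * ln B \<le> ln (p * A + (1-p) * B)"
proof -
  define M where "M = p * A + (1-p) * B"
  have M: "0 < M" unfolding M_def using assms
    by (cases "p = 0") (auto intro: add_pos_nonneg)
  have 1: "ln (A/M) \<le> A/M - 1" using assms M by (intro ln_le_minus_one) auto
  have 2: "ln (B/M) \<le> B/M - 1" using assms M by (intro ln_le_minus_one) auto
  have "p * ln (A/M) + (1-p) * ln (B/M) \<le> p * (A/M - 1) + (1-p) * (B/M - 1)"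
    using 1 2 assms by (intro add_mono mult_left_mono) auto
  also have "\<dots> = 0" using M by (simp add: M_def field_simps)
  moreover have "p * ln (A/M) + (1-p) * ln (B/M) = p * ln A + (1-p) * ln B - ln M"
    using assms M by (simp add: ln_div algebra_simps)
  ultimately show ?thesis by (simp add: M_def)
qed

lemma twopt_kl:
  fixes p q v1 v0 :: real
  assumes "0 < p" "p < 1" "0 < q" "q < 1" "0 < v1" "0 < v0"
  shows "p * ln v1 + (1-p) * ln v0 - kl_bern p q \<le> ln (q * v1 + (1-q) * v0)"
proof -
  have "p * ln (q * v1/p) + (1-p) * ln ((1-q) * v0/(1-p)) \<le> ln (p * (q * v1/p) + (1-p) * ((1-q) * v0/(1-p)))"
    using assms by (intro ln_concave2) auto
  also have "p * (q * v1/p) + (1-p) * ((1-q) * v0/(1-p)) = q * v1 + (1-q) * v0" using assms by simp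
  also have "p * ln (q * v1/p) + (1-p) * ln ((1-q) * v0/(1-p)) = p * ln v1 + (1-p) * ln v0 - kl_bern p q"
  proof -
    have e1: "ln (q * v1/p) = ln q + ln v1 - ln p" using assms by (simp add: ln_div ln_mult)
    have e2: "ln ((1-q) * v0/(1-p)) = ln (1-q) + ln v0 - ln (1-p)" using assms by (simp add: ln_div ln_mult)
    have e3: "ln (p/q) = ln p - ln q" "ln ((1-p)/(1-q)) = ln (1-p) - ln (1-q)" using assms by (simp_all add: ln_div)
    show ?thesis unfolding kl_bern_def e1 e2 e3 by (simp add: algebra_simps)
  qed
  finally show ?thesis .
qed



lemma one_step:
  fixes f :: "history \<Rightarrow> real"
  assumes valid: "valid_policy K \<pi>" and th: "\<forall>i\<in>{1..K}. 0 \<le> \<theta> i \<and> \<theta> i \<le> 1"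
    and pk: "0 < \<theta> k" "\<theta> k < 1" and qk: "0 < \<theta>' k" "\<theta>' k < 1"
    and same: "\<And>i. i \<noteq> k \<Longrightarrow> \<theta>' i = \<theta> i"
    and bd: "\<And>h. \<bar>f h\<bar> \<le> B"
  shows "stepE \<pi> \<theta> \<delta> n h f - kl_bern (\<theta> k) (\<theta>' k) * (if act \<pi> n h = k then 1 else 0)
           \<le> ln (stepE \<pi> \<theta>' \<delta> n h (\<lambda>h. exp (f h)))"
proof -
  define a where "a = act \<pi> n h"
  have aK: "a \<in> {1..K}" using valid by (simp add: valid_policy_def act_def a_def)
  define u where "u c = measure_pmf.expectation \<delta> (\<lambda>d. f (h @ [(a, c, d)]))" for c
  define v where "v c = measure_pmf.expectation \<delta> (\<lambda>d. exp (f (h @ [(a, c, d)])))" for c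
  have ev: "exp (u c) \<le> v c" for c unfolding u_def v_def
    by (rule jensen_exp[where B=B]) (simp add: bd)
  have vpos: "0 < v c" for c using ev[of c] exp_gt_zero[of "u c"] by linarith
  have uv: "u c \<le> ln (v c)" for c
    using ev[of c] vpos[of c] by (metis exp_gt_zero ln_exp ln_le_cancel_iff)
  have s1: "stepE \<pi> \<theta> \<delta> n h f = \<theta> a * u True + (1 - \<theta> a) * u False"
    unfolding stepE_def a_def[symmetric] u_def by simp
  have s2: "stepE \<pi> \<theta>' \<delta> n h (\<lambda>h. exp (f h)) = \<theta>' a * v True + (1 - \<theta>' a) * v False"
    unfolding stepE_def a_def[symmetric] v_def by simp
  have ta: "0 \<le> \<theta> a" "\<theta> a \<le> 1" using th aK by auto
  have mix: "\<theta> a * u True + (1 - \<theta> a) * u False \<le> \<theta> a * ln (v True) + (1 - \<theta> a) * ln (v False)"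
    using ta uv by (intro add_mono mult_left_mono) auto
  show ?thesis
  proof (cases "a = k")
    case True
    have "\<theta> a * ln (v True) + (1 - \<theta> a) * ln (v False) - kl_bern (\<theta> k) (\<theta>' k)
          \<le> ln (\<theta>' k * v True + (1 - \<theta>' k) * v False)"
      using True pk qk vpos twopt_kl[of "\<theta> k" "\<theta>' k" "v True" "v False"] by simp
    then show ?thesis using mix True s1 s2 a_def by simp
  next
    case False
    have "\<theta> a * ln (v True) + (1 - \<theta> a) * ln (v False) \<le> ln (\<theta> a * v True + (1 - \<theta> a) * v False)"
      using ta vpos by (intro ln_concave2) auto
    then show ?thesis using mix False s1 s2 same[of a] a_def by simp
  qed
qed

lemma stepE_bounds:
  fixes F :: "history \<Rightarrow> real"
  assumes valid: "valid_policy K \<pi>" and th: "\<forall>i\<in>{1..K}. 0 \<le> \<theta> i \<and> \<theta> i \<le> 1"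
    and lb: "\<And>x. l \<le> F x" and ub: "\<And>x. F x \<le> u"
  shows "l \<le> stepE \<pi> \<theta> \<delta> n h F \<and> stepE \<pi> \<theta> \<delta> n h F \<le> u"
proof -
  define a where "a = act \<pi> n h"
  have aK: "a \<in> {1..K}" using valid by (simp add: valid_policy_def act_def a_def)
  have ta: "0 \<le> \<theta> a" "\<theta> a \<le> 1" using th aK by auto
  have b1: "l \<le> measure_pmf.expectation \<delta> (\<lambda>d. F (h @ [(a, c, d)]))
        \<and> measure_pmf.expectation \<delta> (\<lambda>d. F (h @ [(a, c, d)])) \<le> u" for c
    using lb ub by (intro expectation_bounds) auto
  have cvx: "l \<le> t * x1 + (1 - t) * x2 \<and> t * x1 + (1 - t) * x2 \<le> u"
    if "l \<le> x1" "x1 \<le> u" "l \<le> x2" "x2 \<le> u" "0 \<le> t" "t \<le> 1" for x1 x2 t :: real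
  proof -
    have "t * l + (1 - t) * l \<le> t * x1 + (1 - t) * x2" using that by (intro add_mono mult_left_mono) auto
    moreover have "t * x1 + (1 - t) * x2 \<le> t * u + (1 - t) * u" using that by (intro add_mono mult_left_mono) auto
    ultimately show ?thesis by (simp add: algebra_simps)
  qed
  show ?thesis unfolding stepE_def a_def[symmetric]
    using cvx[OF conjunct1[OF b1[of True]] conjunct2[OF b1[of True]] conjunct1[OF b1[of False]] conjunct2[OF b1[of False]] ta] .
qed

lemma gibbs:
  assumes valid: "valid_policy K \<pi>" and th: "\<forall>i\<in>{1..K}. 0 \<le> \<theta> i \<and> \<theta> i \<le> 1"
    and th': "\<forall>i\<in>{1..K}. 0 \<le> \<theta>' i \<and> \<theta>' i \<le> 1"
    and pk: "0 < \<theta> k" "\<theta> k < 1" and qk: "0 < \<theta>' k" "\<theta>' k < 1"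
    and same: "\<And>i. i \<noteq> k \<Longrightarrow> \<theta>' i = \<theta> i"
  shows "(\<And>h. \<bar>f h\<bar> \<le> B) \<Longrightarrow>
    measure_pmf.expectation (hist \<pi> \<theta> \<delta> n) f
      - kl_bern (\<theta> k) (\<theta>' k) * measure_pmf.expectation (hist \<pi> \<theta> \<delta> n) (cnt k n)
    \<le> ln (measure_pmf.expectation (hist \<pi> \<theta>' \<delta> n) (\<lambda>h. exp (f h)))"
proof (induction n arbitrary: f B)
  case 0
  then show ?case by (simp add: cnt_def)
next
  case (Suc n)
  note bd = Suc.prems
  define kl where "kl = kl_bern (\<theta> k) (\<theta>' k)"
  define G where "G h = ln (stepE \<pi> \<theta>' \<delta> n h (\<lambda>h. exp (f h)))" for h
  have sb: "exp (- B) \<le> stepE \<pi> \<theta>' \<delta> n h (\<lambda>h. exp (f h)) \<and> stepE \<pi> \<theta>' \<delta> n h (\<lambda>h. exp (f h)) \<le> exp B" for h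
    using bd by (intro stepE_bounds[OF valid th']) (auto simp: abs_le_iff, smt (verit) bd)
  have Gb: "\<bar>G h\<bar> \<le> B" for h
  proof -
    have "ln (exp (- B)) \<le> G h" "G h \<le> ln (exp B)" unfolding G_def using sb[of h]
      by (metis exp_gt_zero ln_le_cancel_iff order_less_le_trans)+
    then show ?thesis by simp
  qed
  have expG: "exp (G h) = stepE \<pi> \<theta>' \<delta> n h (\<lambda>h. exp (f h))" for h
    unfolding G_def using sb[of h] by (metis exp_gt_zero exp_ln order_less_le_trans)
  have IH: "measure_pmf.expectation (hist \<pi> \<theta> \<delta> n) G - kl * measure_pmf.expectation (hist \<pi> \<theta> \<delta> n) (cnt k n)
      \<le> ln (measure_pmf.expectation (hist \<pi> \<theta>' \<delta> n) (\<lambda>h. exp (G h)))"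
    unfolding kl_def by (rule Suc.IH[OF Gb])
  have fb': "\<bar>exp (f h)\<bar> \<le> exp B" for h using bd[of h] by simp
  have E1: "measure_pmf.expectation (hist \<pi> \<theta>' \<delta> (Suc n)) (\<lambda>h. exp (f h))
      = measure_pmf.expectation (hist \<pi> \<theta>' \<delta> n) (\<lambda>h. exp (G h))"
    by (subst step_integral[OF valid th' fb']) (simp add: expG)
  have E2: "measure_pmf.expectation (hist \<pi> \<theta> \<delta> (Suc n)) f
      = measure_pmf.expectation (hist \<pi> \<theta> \<delta> n) (\<lambda>h. stepE \<pi> \<theta> \<delta> n h f)"
    by (rule step_integral[OF valid th bd])
  define ind where "ind h = (if act \<pi> n h = k then 1 else 0 :: real)" for h
  have cb: "\<bar>cnt k (Suc n) h\<bar> \<le> Suc n" for h using cnt_nonneg[of k "Suc n" h] cnt_le[of k "Suc n" h] by simp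
  have E3: "measure_pmf.expectation (hist \<pi> \<theta> \<delta> (Suc n)) (cnt k (Suc n))
      = measure_pmf.expectation (hist \<pi> \<theta> \<delta> n) (\<lambda>h. cnt k n h + ind h)"
  proof -
    have "measure_pmf.expectation (hist \<pi> \<theta> \<delta> (Suc n)) (cnt k (Suc n))
        = measure_pmf.expectation (hist \<pi> \<theta> \<delta> n) (\<lambda>h. stepE \<pi> \<theta> \<delta> n h (cnt k (Suc n)))"
      by (rule step_integral[OF valid th cb])
    also have "\<dots> = measure_pmf.expectation (hist \<pi> \<theta> \<delta> n) (\<lambda>h. cnt k n h + ind h)"
    proof (intro integral_cong_AE)
      show "AE h in measure_pmf (hist \<pi> \<theta> \<delta> n). stepE \<pi> \<theta> \<delta> n h (cnt k (Suc n)) = cnt k n h + ind h"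
        unfolding AE_measure_pmf_iff
      proof
        fix h assume "h \<in> set_pmf (hist \<pi> \<theta> \<delta> n)"
        then have "length h = n" by (rule hist_length)
        then show "stepE \<pi> \<theta> \<delta> n h (cnt k (Suc n)) = cnt k n h + ind h"
          by (simp add: stepE_def cnt_snoc ind_def algebra_simps)
      qed
    qed auto
    finally show ?thesis .
  qed
  have os: "stepE \<pi> \<theta> \<delta> n h f - kl * ind h \<le> G h" for h
    unfolding kl_def ind_def G_def by (rule one_step[OF valid th pk qk same bd])
  have lbB: "- B \<le> f x" and ubB: "f x \<le> B" for x using bd[of x] by linarith+
  have sfb: "\<bar>stepE \<pi> \<theta> \<delta> n h f\<bar> \<le> B" for h
    using stepE_bounds[OF valid th, of "-B" f B, OF lbB ubB, of \<delta> n h] by (simp add: abs_le_iff)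
  have indb: "\<bar>ind h\<bar> \<le> 1" for h by (simp add: ind_def)
  have cnb: "\<bar>cnt k n h\<bar> \<le> n" for h using cnt_nonneg[of k n h] cnt_le[of k n h] by simp
  let ?M = "measure_pmf (hist \<pi> \<theta> \<delta> n)"
  have i1: "integrable ?M (\<lambda>h. stepE \<pi> \<theta> \<delta> n h f)" by (rule integrable_pmf_bdd[where B=B]) (rule sfb)
  have i2: "integrable ?M ind" by (rule integrable_pmf_bdd[where B=1]) (rule indb)
  have i3: "integrable ?M (cnt k n)" by (rule integrable_pmf_bdd[where B=n]) (rule cnb)
  have i4: "integrable ?M G" by (rule integrable_pmf_bdd[where B=B]) (rule Gb)
  have i2': "integrable ?M (\<lambda>h. kl * ind h)" using i2 by simp
  have q1: "measure_pmf.expectation (hist \<pi> \<theta> \<delta> n) (\<lambda>h. stepE \<pi> \<theta> \<delta> n h f - kl * ind h)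
     = measure_pmf.expectation (hist \<pi> \<theta> \<delta> n) (\<lambda>h. stepE \<pi> \<theta> \<delta> n h f) - kl * measure_pmf.expectation (hist \<pi> \<theta> \<delta> n) ind"
    using Bochner_Integration.integral_diff[OF i1 i2'] by simp
  have q2: "measure_pmf.expectation (hist \<pi> \<theta> \<delta> n) (\<lambda>h. cnt k n h + ind h)
     = measure_pmf.expectation (hist \<pi> \<theta> \<delta> n) (cnt k n) + measure_pmf.expectation (hist \<pi> \<theta> \<delta> n) ind"
    using Bochner_Integration.integral_add[OF i3 i2] by simp
  have "measure_pmf.expectation (hist \<pi> \<theta> \<delta> (Suc n)) f - kl * measure_pmf.expectation (hist \<pi> \<theta> \<delta> (Suc n)) (cnt k (Suc n))
      = measure_pmf.expectation (hist \<pi> \<theta> \<delta> n) (\<lambda>h. stepE \<pi> \<theta> \<delta> n h f - kl * ind h)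
        - kl * measure_pmf.expectation (hist \<pi> \<theta> \<delta> n) (cnt k n)"
    unfolding E2 E3 q1 q2 by (simp add: algebra_simps)
  also have "\<dots> \<le> measure_pmf.expectation (hist \<pi> \<theta> \<delta> n) G - kl * measure_pmf.expectation (hist \<pi> \<theta> \<delta> n) (cnt k n)"
    using os i1 i2' i4 by (intro diff_right_mono integral_mono) auto
  also have "\<dots> \<le> ln (measure_pmf.expectation (hist \<pi> \<theta>' \<delta> (Suc n)) (\<lambda>h. exp (f h)))"
    using IH E1 by simp
  finally show ?case unfolding kl_def .
qed


definition rind :: "nat \<Rightarrow> nat \<Rightarrow> (nat \<times> bool \<times> nat) \<Rightarrow> real" where
  "rind T s x = (if fst (snd x) \<and> snd (snd x) \<le> T - Suc s then 1 else 0)"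

lemma cum_reward_alt: "cum_reward h T = (\<Sum>s<T. rind T s (h ! s))"
proof (induction T)
  case 0
  then show ?case by (simp add: cum_reward_def)
next
  case (Suc T)
  have rr: "round_reward h (Suc T) = (\<Sum>s<Suc T. if fst (snd (h ! s)) \<and> snd (snd (h ! s)) = T - s then 1 else 0)"
    by (simp only: round_reward_def One_nat_def sum.atLeast1_atMost_eq) simp
  have c: "cum_reward h (Suc T) = cum_reward h T + round_reward h (Suc T)"
    unfolding cum_reward_def by simp
  have pt: "rind (Suc T) s (h ! s) = rind T s (h ! s) + (if fst (snd (h ! s)) \<and> snd (snd (h ! s)) = T - s then 1 else 0)"
    if "s < T" for s using that by (auto simp: rind_def)
  have "(\<Sum>s<Suc T. rind (Suc T) s (h ! s))
      = (\<Sum>s<T. rind (Suc T) s (h ! s)) + rind (Suc T) T (h ! T)" by simp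
  also have "(\<Sum>s<T. rind (Suc T) s (h ! s)) = (\<Sum>s<T. rind T s (h ! s))
       + (\<Sum>s<T. if fst (snd (h ! s)) \<and> snd (snd (h ! s)) = T - s then 1 else 0)"
    by (simp add: pt sum.distrib)
  also have "rind (Suc T) T (h ! T) = (if fst (snd (h ! T)) \<and> snd (snd (h ! T)) = T - T then 1 else 0)"
    by (simp add: rind_def)
  finally show ?case using c rr Suc.IH by simp
qed

definition psi :: "nat \<Rightarrow> (nat \<Rightarrow> real) \<Rightarrow> nat pmf \<Rightarrow> (nat \<Rightarrow> (nat \<times> bool \<times> nat) \<Rightarrow> real) \<Rightarrow> nat \<Rightarrow> nat \<Rightarrow> real" where
  "psi K \<theta> \<delta> \<phi> s a = (if a \<in> {1..K} then \<theta> a * measure_pmf.expectation \<delta> (\<lambda>d. \<phi> s (a, True, d))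
       + (1 - \<theta> a) * measure_pmf.expectation \<delta> (\<lambda>d. \<phi> s (a, False, d)) else 0)"

lemma psi_bound:
  assumes th: "\<forall>i\<in>{1..K}. 0 \<le> \<theta> i \<and> \<theta> i \<le> 1" and bd: "\<And>s x. \<bar>\<phi> s x\<bar> \<le> B"
  shows "\<bar>psi K \<theta> \<delta> \<phi> s a\<bar> \<le> B"
proof (cases "a \<in> {1..K}")
  case True
  have t: "0 \<le> \<theta> a" "\<theta> a \<le> 1" using th True by auto
  have e: "\<bar>measure_pmf.expectation \<delta> (\<lambda>d. \<phi> s (a, c, d))\<bar> \<le> B" for c
  proof -
    have "- B \<le> \<phi> s (a, c, d) \<and> \<phi> s (a, c, d) \<le> B" for d using bd[of s "(a,c,d)"] by linarith
    then have "- B \<le> measure_pmf.expectation \<delta> (\<lambda>d. \<phi> s (a, c, d)) \<and> measure_pmf.expectation \<delta> (\<lambda>d. \<phi> s (a, c, d)) \<le> B"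
      by (intro expectation_bounds) auto
    then show ?thesis by linarith
  qed
  have "\<bar>psi K \<theta> \<delta> \<phi> s a\<bar> \<le> \<theta> a * B + (1 - \<theta> a) * B"
    unfolding psi_def using True t e
    by (simp, intro order_trans[OF abs_triangle_ineq] add_mono)
       (auto simp: abs_mult intro: mult_left_mono)
  then show ?thesis by (simp add: algebra_simps)
next
  case False
  have "0 \<le> B" using bd[of s "(0, True, 0)"] by linarith
  then show ?thesis using False unfolding psi_def by auto
qed



lemma sum_abs_bound:
  fixes g :: "nat \<Rightarrow> real"
  assumes "\<And>s. \<bar>g s\<bar> \<le> B"
  shows "\<bar>\<Sum>s<m. g s\<bar> \<le> real m * B"
proof -
  have "\<bar>\<Sum>s<m. g s\<bar> \<le> (\<Sum>s<m. \<bar>g s\<bar>)" by (rule sum_abs)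
  also have "\<dots> \<le> (\<Sum>s<m. B)" using assms by (intro sum_mono) auto
  finally show ?thesis by simp
qed

lemma expectation_add_const:
  fixes g :: "_ \<Rightarrow> real"
  assumes "\<And>x. \<bar>g x\<bar> \<le> B"
  shows "measure_pmf.expectation p (\<lambda>x. c + g x) = c + measure_pmf.expectation p g"
proof -
  have "integrable (measure_pmf p) g" using assms by (rule integrable_pmf_bdd)
  then show ?thesis by (simp add: Bochner_Integration.integral_add)
qed

lemma additive:
  fixes \<phi> :: "nat \<Rightarrow> (nat \<times> bool \<times> nat) \<Rightarrow> real"
  assumes valid: "valid_policy K \<pi>" and th: "\<forall>i\<in>{1..K}. 0 \<le> \<theta> i \<and> \<theta> i \<le> 1"
    and bd: "\<And>s x. \<bar>\<phi> s x\<bar> \<le> B"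
  shows "measure_pmf.expectation (hist \<pi> \<theta> \<delta> n) (\<lambda>h. \<Sum>s<n. \<phi> s (h ! s))
       = measure_pmf.expectation (hist \<pi> \<theta> \<delta> n) (\<lambda>h. \<Sum>s<n. psi K \<theta> \<delta> \<phi> s (fst (h ! s)))"
proof (induction n)
  case 0
  then show ?case by simp
next
  case (Suc n)
  have pb: "\<bar>psi K \<theta> \<delta> \<phi> s a\<bar> \<le> B" for s a by (rule psi_bound[OF th bd])
  let ?M = "hist \<pi> \<theta> \<delta> n"
  define A where "A h = (\<Sum>s<n. \<phi> s (h ! s))" for h
  define C where "C (h::history) = (\<Sum>s<n. psi K \<theta> \<delta> \<phi> s (fst (h ! s)))" for h
  define P where "P h = psi K \<theta> \<delta> \<phi> n (act \<pi> n h)" for h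
  have Ab: "\<bar>A h\<bar> \<le> real n * B" for h unfolding A_def by (rule sum_abs_bound) (rule bd)
  have Cb: "\<bar>C h\<bar> \<le> real n * B" for h unfolding C_def by (rule sum_abs_bound) (rule pb)
  have Pb: "\<bar>P h\<bar> \<le> B" for h unfolding P_def by (rule pb)
  have e1: "measure_pmf.expectation (hist \<pi> \<theta> \<delta> (Suc n)) (\<lambda>h. \<Sum>s<Suc n. \<phi> s (h ! s))
      = measure_pmf.expectation ?M (\<lambda>h. A h + P h)"
  proof -
    have "measure_pmf.expectation (hist \<pi> \<theta> \<delta> (Suc n)) (\<lambda>h. \<Sum>s<Suc n. \<phi> s (h ! s))
      = measure_pmf.expectation ?M (\<lambda>h. stepE \<pi> \<theta> \<delta> n h (\<lambda>h. \<Sum>s<Suc n. \<phi> s (h ! s)))"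
      by (rule step_integral[OF valid th]) (rule sum_abs_bound, rule bd)
    also have "\<dots> = measure_pmf.expectation ?M (\<lambda>h. A h + P h)"
    proof (intro integral_cong_AE)
      show "AE h in measure_pmf ?M. stepE \<pi> \<theta> \<delta> n h (\<lambda>h. \<Sum>s<Suc n. \<phi> s (h ! s)) = A h + P h"
        unfolding AE_measure_pmf_iff
      proof
        fix h assume "h \<in> set_pmf (hist \<pi> \<theta> \<delta> n)"
        then have len: "length h = n" by (rule hist_length)
        have aK: "act \<pi> n h \<in> {1..K}" using valid by (simp add: valid_policy_def act_def)
        have sh: "(\<Sum>s<Suc n. \<phi> s ((h @ [x]) ! s)) = A h + \<phi> n x" for x
          using len by (simp add: A_def nth_append)
        show "stepE \<pi> \<theta> \<delta> n h (\<lambda>h. \<Sum>s<Suc n. \<phi> s (h ! s)) = A h + P h"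
          unfolding stepE_def sh P_def psi_def
          using aK by (simp add: expectation_add_const[where B=B, OF bd] algebra_simps)
      qed
    qed auto
    finally show ?thesis .
  qed
  have e2: "measure_pmf.expectation (hist \<pi> \<theta> \<delta> (Suc n)) (\<lambda>h::history. \<Sum>s<Suc n. psi K \<theta> \<delta> \<phi> s (fst (h ! s)))
      = measure_pmf.expectation ?M (\<lambda>h. C h + P h)"
  proof -
    have "measure_pmf.expectation (hist \<pi> \<theta> \<delta> (Suc n)) (\<lambda>h::history. \<Sum>s<Suc n. psi K \<theta> \<delta> \<phi> s (fst (h ! s)))
      = measure_pmf.expectation ?M (\<lambda>h. stepE \<pi> \<theta> \<delta> n h (\<lambda>h::history. \<Sum>s<Suc n. psi K \<theta> \<delta> \<phi> s (fst (h ! s))))"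
      by (rule step_integral[OF valid th]) (rule sum_abs_bound, rule pb)
    also have "\<dots> = measure_pmf.expectation ?M (\<lambda>h. C h + P h)"
    proof (intro integral_cong_AE)
      show "AE h in measure_pmf ?M. stepE \<pi> \<theta> \<delta> n h (\<lambda>h::history. \<Sum>s<Suc n. psi K \<theta> \<delta> \<phi> s (fst (h ! s))) = C h + P h"
        unfolding AE_measure_pmf_iff
      proof
        fix h assume "h \<in> set_pmf (hist \<pi> \<theta> \<delta> n)"
        then have len: "length h = n" by (rule hist_length)
        have sh: "(\<Sum>s<Suc n. psi K \<theta> \<delta> \<phi> s (fst ((h @ [x]) ! s))) = C h + psi K \<theta> \<delta> \<phi> n (fst x)" for x
          using len by (simp add: C_def nth_append)
        show "stepE \<pi> \<theta> \<delta> n h (\<lambda>h::history. \<Sum>s<Suc n. psi K \<theta> \<delta> \<phi> s (fst (h ! s))) = C h + P h"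
          unfolding stepE_def sh P_def by (simp add: algebra_simps)
      qed
    qed auto
    finally show ?thesis .
  qed
  have iA: "integrable (measure_pmf ?M) A" using Ab by (rule integrable_pmf_bdd)
  have iC: "integrable (measure_pmf ?M) C" using Cb by (rule integrable_pmf_bdd)
  have iP: "integrable (measure_pmf ?M) P" using Pb by (rule integrable_pmf_bdd)
  have "measure_pmf.expectation ?M A = measure_pmf.expectation ?M C"
    using Suc.IH unfolding A_def C_def .
  then show ?case unfolding e1 e2
    using Bochner_Integration.integral_add[OF iA iP] Bochner_Integration.integral_add[OF iC iP] by simp
qed



definition tau :: "nat pmf \<Rightarrow> nat \<Rightarrow> real" where
  "tau \<delta> m = measure_pmf.expectation \<delta> (\<lambda>d. if d \<le> m then 1 else 0)"

lemma tau_bounds: "0 \<le> tau \<delta> m \<and> tau \<delta> m \<le> 1"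
  unfolding tau_def by (intro expectation_bounds) auto

lemma exp_reward_form:
  assumes valid: "valid_policy K \<pi>" and th: "\<forall>i\<in>{1..K}. 0 \<le> \<theta> i \<and> \<theta> i \<le> 1"
  shows "exp_reward \<pi> \<theta> \<delta> T = measure_pmf.expectation (hist \<pi> \<theta> \<delta> T)
           (\<lambda>h. \<Sum>s<T. \<theta> (fst (h ! s)) * tau \<delta> (T - Suc s))"
proof -
  have bd: "\<bar>rind T s x\<bar> \<le> 1" for s x by (simp add: rind_def)
  have "exp_reward \<pi> \<theta> \<delta> T = measure_pmf.expectation (hist \<pi> \<theta> \<delta> T) (\<lambda>h. \<Sum>s<T. rind T s (h ! s))"
    unfolding exp_reward_def cum_reward_alt ..
  also have "\<dots> = measure_pmf.expectation (hist \<pi> \<theta> \<delta> T) (\<lambda>h. \<Sum>s<T. psi K \<theta> \<delta> (rind T) s (fst (h ! s)))"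
    by (rule additive[OF valid th bd])
  also have "\<dots> = measure_pmf.expectation (hist \<pi> \<theta> \<delta> T) (\<lambda>h. \<Sum>s<T. \<theta> (fst (h ! s)) * tau \<delta> (T - Suc s))"
  proof (intro integral_cong_AE)
    show "AE h in measure_pmf (hist \<pi> \<theta> \<delta> T). (\<Sum>s<T. psi K \<theta> \<delta> (rind T) s (fst (h ! s)))
         = (\<Sum>s<T. \<theta> (fst (h ! s)) * tau \<delta> (T - Suc s))"
      unfolding AE_measure_pmf_iff
    proof
      fix h assume h: "h \<in> set_pmf (hist \<pi> \<theta> \<delta> T)"
      have len: "length h = T" using h by (rule hist_length)
      have aK: "fst (h ! s) \<in> {1..K}" if "s < T" for s
        using hist_arms[of \<pi> "{1..K}", OF _ h] valid len that by (simp add: valid_policy_def)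
      show "(\<Sum>s<T. psi K \<theta> \<delta> (rind T) s (fst (h ! s))) = (\<Sum>s<T. \<theta> (fst (h ! s)) * tau \<delta> (T - Suc s))"
        by (intro sum.cong refl) (use aK in \<open>auto simp: psi_def rind_def tau_def\<close>)
    qed
  qed auto
  finally show ?thesis .
qed

lemma exp_reward_const:
  assumes j: "j \<in> {1..K}" and th: "\<forall>i\<in>{1..K}. 0 \<le> \<theta> i \<and> \<theta> i \<le> 1"
  shows "exp_reward (const_policy j) \<theta> \<delta> T = (\<Sum>s<T. \<theta> j * tau \<delta> (T - Suc s))"
proof -
  have valid: "valid_policy K (const_policy j)" using j by (simp add: valid_policy_def const_policy_def)
  have "exp_reward (const_policy j) \<theta> \<delta> T = measure_pmf.expectation (hist (const_policy j) \<theta> \<delta> T)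
           (\<lambda>h. \<Sum>s<T. \<theta> (fst (h ! s)) * tau \<delta> (T - Suc s))"
    by (rule exp_reward_form[OF valid th])
  also have "\<dots> = measure_pmf.expectation (hist (const_policy j) \<theta> \<delta> T) (\<lambda>h. \<Sum>s<T. \<theta> j * tau \<delta> (T - Suc s))"
  proof (intro integral_cong_AE)
    show "AE h in measure_pmf (hist (const_policy j) \<theta> \<delta> T). (\<Sum>s<T. \<theta> (fst (h ! s)) * tau \<delta> (T - Suc s))
         = (\<Sum>s<T. \<theta> j * tau \<delta> (T - Suc s))"
      unfolding AE_measure_pmf_iff
    proof
      fix h assume h: "h \<in> set_pmf (hist (const_policy j) \<theta> \<delta> T)"
      have len: "length h = T" using h by (rule hist_length)
      have aK: "fst (h ! s) = j" if "s < T" for s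
        using hist_arms[of "const_policy j" "{j}", OF _ h] len that by (simp add: const_policy_def)
      show "(\<Sum>s<T. \<theta> (fst (h ! s)) * tau \<delta> (T - Suc s)) = (\<Sum>s<T. \<theta> j * tau \<delta> (T - Suc s))"
        by (intro sum.cong refl) (use aK in auto)
    qed
  qed auto
  finally show ?thesis by simp
qed

lemma tail_sum_le:
  assumes int: "integrable (measure_pmf \<delta>) (\<lambda>d. real d)"
  shows "(\<Sum>s<T. 1 - tau \<delta> (T - Suc s)) \<le> measure_pmf.expectation \<delta> (\<lambda>d. real d)"
proof -
  have "(\<Sum>s<T. 1 - tau \<delta> (T - Suc s)) = (\<Sum>m<T. 1 - tau \<delta> m)"
    by (rule sum.nat_diff_reindex)
  also have "\<dots> = (\<Sum>m<T. measure_pmf.expectation \<delta> (\<lambda>d. if d \<le> m then 0 else 1))"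
  proof (intro sum.cong refl)
    fix m
    have i: "integrable (measure_pmf \<delta>) (\<lambda>d. if d \<le> m then 1 else 0 :: real)"
      by (rule integrable_pmf_bdd[where B=1]) simp
    have "measure_pmf.expectation \<delta> (\<lambda>d. (1::real) - (if d \<le> m then 1 else 0)) = 1 - tau \<delta> m"
      unfolding tau_def using Bochner_Integration.integral_diff[OF integrable_pmf_bdd[of "\<lambda>_. 1::real" 1] i] by simp
    then show "1 - tau \<delta> m = measure_pmf.expectation \<delta> (\<lambda>d. if d \<le> m then 0 else 1)"
      by (simp add: if_distrib cong: if_cong)
  qed
  also have "\<dots> = measure_pmf.expectation \<delta> (\<lambda>d. \<Sum>m<T. if d \<le> m then 0 else 1)"
    by (subst Bochner_Integration.integral_sum) (auto intro!: integrable_pmf_bdd[where B=1])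
  also have "\<dots> \<le> measure_pmf.expectation \<delta> (\<lambda>d. real d)"
  proof (rule integral_mono)
    show "integrable (measure_pmf \<delta>) (\<lambda>d. \<Sum>m<T. if d \<le> m then 0 else 1 :: real)"
      by (rule integrable_pmf_bdd[where B=T]) (rule order_trans[OF sum_abs_bound[where B=1]], auto)
    show "integrable (measure_pmf \<delta>) (\<lambda>d. real d)" by (rule int)
    fix d :: nat
    have "(\<Sum>m<T. if d \<le> m then 0 else 1 :: real) = real (min d T)"
      by (induction T) (auto simp: min_def)
    then show "(\<Sum>m<T. if d \<le> m then 0 else 1 :: real) \<le> real d" by simp
  qed
  finally show ?thesis .
qed



lemma integrable_pmf_AE:
  fixes f :: "_ \<Rightarrow> real"
  shows "(\<And>x. x \<in> set_pmf p \<Longrightarrow> \<bar>f x\<bar> \<le> B) \<Longrightarrow> integrable (measure_pmf p) f"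
  by (rule measure_pmf.integrable_const_bound[where B=B]) (auto simp: AE_measure_pmf_iff)

lemma hist_armsK:
  assumes valid: "valid_policy K \<pi>" and h: "h \<in> set_pmf (hist \<pi> \<theta> \<delta> T)" and s: "s < T"
  shows "fst (h ! s) \<in> {1..K}"
proof -
  have len: "length h = T" using h by (rule hist_length)
  show ?thesis using hist_arms[of \<pi> "{1..K}", OF _ h] valid len s by (simp add: valid_policy_def)
qed

lemma regret_lb:
  assumes valid: "valid_policy K \<pi>" and th: "\<forall>i\<in>{1..K}. 0 \<le> \<theta> i \<and> \<theta> i \<le> 1"
    and j: "j \<in> {1..K}" and int: "integrable (measure_pmf \<delta>) (\<lambda>d. real d)"
  shows "measure_pmf.expectation (hist \<pi> \<theta> \<delta> T) (\<lambda>h. \<Sum>s<T. \<theta> j - \<theta> (fst (h ! s)))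
           - measure_pmf.expectation \<delta> (\<lambda>d. real d) \<le> regret K \<pi> \<theta> \<delta> T"
proof -
  let ?M = "hist \<pi> \<theta> \<delta> T"
  define X where "X (h::history) = (\<Sum>s<T. \<theta> (fst (h ! s)) * tau \<delta> (T - Suc s))" for h
  define Y where "Y (h::history) = (\<Sum>s<T. \<theta> j - \<theta> (fst (h ! s)))" for h
  define c where "c = (\<Sum>s<T. \<theta> j * tau \<delta> (T - Suc s))"
  define D where "D = (\<Sum>s<T. 1 - tau \<delta> (T - Suc s))"
  have reg: "c - measure_pmf.expectation ?M X \<le> regret K \<pi> \<theta> \<delta> T"
  proof -
    have "exp_reward (const_policy j) \<theta> \<delta> T \<le> (MAX k\<in>{1..K}. exp_reward (const_policy k) \<theta> \<delta> T)"
      using j by (intro Max_ge) auto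
    then show ?thesis unfolding regret_def c_def X_def
      using exp_reward_const[OF j th] exp_reward_form[OF valid th] by simp
  qed
  have tb: "0 \<le> tau \<delta> m" "tau \<delta> m \<le> 1" for m using tau_bounds by auto
  have sup: "\<bar>\<theta> (fst (h ! s))\<bar> \<le> 1" "0 \<le> \<theta> (fst (h ! s))" "\<theta> (fst (h ! s)) \<le> 1"
    if "h \<in> set_pmf ?M" "s < T" for h s
    using hist_armsK[OF valid that] th by auto
  have tj: "0 \<le> \<theta> j" "\<theta> j \<le> 1" using th j by auto
  have iX: "integrable (measure_pmf ?M) X"
  proof (rule integrable_pmf_AE[where B=T])
    fix h assume h: "h \<in> set_pmf ?M"
    have "\<bar>X h\<bar> \<le> (\<Sum>s<T. \<bar>\<theta> (fst (h ! s)) * tau \<delta> (T - Suc s)\<bar>)" unfolding X_def by (rule sum_abs)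
    also have "\<dots> \<le> (\<Sum>s<T. 1)"
      using sup[OF h] tb by (intro sum_mono) (auto simp: abs_mult intro: mult_le_one)
    finally show "\<bar>X h\<bar> \<le> real T" by simp
  qed
  have iY: "integrable (measure_pmf ?M) Y"
  proof (rule integrable_pmf_AE[where B=T])
    fix h assume h: "h \<in> set_pmf ?M"
    have "\<bar>Y h\<bar> \<le> (\<Sum>s<T. \<bar>\<theta> j - \<theta> (fst (h ! s))\<bar>)" unfolding Y_def by (rule sum_abs)
    also have "\<dots> \<le> (\<Sum>s<T. 1)"
    proof (intro sum_mono)
      fix s assume "s \<in> {..<T}"
      then have "0 \<le> \<theta> (fst (h ! s))" "\<theta> (fst (h ! s)) \<le> 1" using sup[OF h] by auto
      then show "\<bar>\<theta> j - \<theta> (fst (h ! s))\<bar> \<le> 1" using tj by linarith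
    qed
    finally show "\<bar>Y h\<bar> \<le> real T" by simp
  qed
  have pw: "X h + Y h \<le> c + D" if h: "h \<in> set_pmf ?M" for h
  proof -
    have "X h + Y h = (\<Sum>s<T. \<theta> (fst (h ! s)) * tau \<delta> (T - Suc s) + (\<theta> j - \<theta> (fst (h ! s))))"
      unfolding X_def Y_def by (simp add: sum.distrib)
    also have "\<dots> \<le> (\<Sum>s<T. \<theta> j * tau \<delta> (T - Suc s) + (1 - tau \<delta> (T - Suc s)))"
    proof (intro sum_mono)
      fix s assume "s \<in> {..<T}"
      then have a: "0 \<le> \<theta> (fst (h ! s))" "\<theta> (fst (h ! s)) \<le> 1" using sup[OF h] by auto
      have "(\<theta> j - \<theta> (fst (h ! s))) * (1 - tau \<delta> (T - Suc s)) \<le> 1 * (1 - tau \<delta> (T - Suc s))"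
        using a tj tb[of "T - Suc s"] by (intro mult_right_mono) auto
      then show "\<theta> (fst (h ! s)) * tau \<delta> (T - Suc s) + (\<theta> j - \<theta> (fst (h ! s)))
          \<le> \<theta> j * tau \<delta> (T - Suc s) + (1 - tau \<delta> (T - Suc s))"
        by (simp add: algebra_simps)
    qed
    also have "\<dots> = c + D" unfolding c_def D_def by (simp add: sum.distrib)
    finally show ?thesis .
  qed
  have "measure_pmf.expectation ?M (\<lambda>h. X h + Y h) \<le> measure_pmf.expectation ?M (\<lambda>h. c + D)"
    by (rule integral_mono_AE) (use iX iY pw in \<open>auto simp: AE_measure_pmf_iff\<close>)
  then have "measure_pmf.expectation ?M X + measure_pmf.expectation ?M Y \<le> c + D"
    using Bochner_Integration.integral_add[OF iX iY] by simp
  moreover have "D \<le> measure_pmf.expectation \<delta> (\<lambda>d. real d)"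
    unfolding D_def by (rule tail_sum_le[OF int])
  ultimately show ?thesis using reg unfolding Y_def by linarith
qed



lemma cnt_integrable: "integrable (measure_pmf p) (cnt k n)"
  by (rule integrable_pmf_bdd[where B=n]) (use cnt_nonneg cnt_le in \<open>auto simp: abs_le_iff intro: order_trans\<close>)

lemma lb_sum:
  assumes valid: "valid_policy K \<pi>" and th: "\<forall>i\<in>{1..K}. 0 \<le> \<theta> i \<and> \<theta> i \<le> 1"
    and opt: "\<forall>k\<in>{1..K}. \<theta> k \<le> \<theta> 1" and K1: "1 \<le> K"
    and int: "integrable (measure_pmf \<delta>) (\<lambda>d. real d)"
  shows "(\<Sum>k\<in>{1..K} - {1}. (\<theta> 1 - \<theta> k) * measure_pmf.expectation (hist \<pi> \<theta> \<delta> T) (cnt k T))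
          - measure_pmf.expectation \<delta> (\<lambda>d. real d) \<le> regret K \<pi> \<theta> \<delta> T"
proof -
  let ?M = "hist \<pi> \<theta> \<delta> T"
  let ?S = "{1..K} - {1}"
  have j: "(1::nat) \<in> {1..K}" using K1 by simp
  have r: "measure_pmf.expectation ?M (\<lambda>h. \<Sum>s<T. \<theta> 1 - \<theta> (fst (h ! s))) - measure_pmf.expectation \<delta> (\<lambda>d. real d)
      \<le> regret K \<pi> \<theta> \<delta> T" by (rule regret_lb[OF valid th j int])
  have pw: "(\<Sum>k\<in>?S. (\<theta> 1 - \<theta> k) * cnt k T h) \<le> (\<Sum>s<T. \<theta> 1 - \<theta> (fst (h ! s)))"
    if h: "h \<in> set_pmf ?M" for h
  proof -
    have "(\<Sum>k\<in>?S. (\<theta> 1 - \<theta> k) * cnt k T h) = (\<Sum>k\<in>?S. \<Sum>s<T. if fst (h ! s) = k then \<theta> 1 - \<theta> k else 0)"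
      unfolding cnt_def by (simp add: sum_distrib_left if_distrib cong: if_cong)
    also have "\<dots> = (\<Sum>s<T. \<Sum>k\<in>?S. if fst (h ! s) = k then \<theta> 1 - \<theta> k else 0)"
      by (rule sum.swap)
    also have "\<dots> = (\<Sum>s<T. if fst (h ! s) \<in> ?S then \<theta> 1 - \<theta> (fst (h ! s)) else 0)"
      by (intro sum.cong refl) (simp add: sum.delta' cong: if_cong)
    also have "\<dots> \<le> (\<Sum>s<T. \<theta> 1 - \<theta> (fst (h ! s)))"
    proof (intro sum_mono)
      fix s assume "s \<in> {..<T}"
      then have "fst (h ! s) \<in> {1..K}" using hist_armsK[OF valid h] by auto
      then show "(if fst (h ! s) \<in> ?S then \<theta> 1 - \<theta> (fst (h ! s)) else 0) \<le> \<theta> 1 - \<theta> (fst (h ! s))"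
        using opt by auto
    qed
    finally show ?thesis .
  qed
  have iY: "integrable (measure_pmf ?M) (\<lambda>h. \<Sum>s<T. \<theta> 1 - \<theta> (fst (h ! s)))"
  proof (rule integrable_pmf_AE[where B=T])
    fix h assume h: "h \<in> set_pmf ?M"
    have "\<bar>\<Sum>s<T. \<theta> 1 - \<theta> (fst (h ! s))\<bar> \<le> (\<Sum>s<T. \<bar>\<theta> 1 - \<theta> (fst (h ! s))\<bar>)" by (rule sum_abs)
    also have "\<dots> \<le> (\<Sum>s<T. 1)"
    proof (intro sum_mono)
      fix s assume "s \<in> {..<T}"
      then have "fst (h ! s) \<in> {1..K}" using hist_armsK[OF valid h] by auto
      then show "\<bar>\<theta> 1 - \<theta> (fst (h ! s))\<bar> \<le> 1" using th j by (smt (verit, best))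
    qed
    finally show "\<bar>\<Sum>s<T. \<theta> 1 - \<theta> (fst (h ! s))\<bar> \<le> real T" by simp
  qed
  have "(\<Sum>k\<in>?S. (\<theta> 1 - \<theta> k) * measure_pmf.expectation ?M (cnt k T))
      = measure_pmf.expectation ?M (\<lambda>h. \<Sum>k\<in>?S. (\<theta> 1 - \<theta> k) * cnt k T h)"
    by (subst Bochner_Integration.integral_sum) (auto intro!: cnt_integrable)
  also have "\<dots> \<le> measure_pmf.expectation ?M (\<lambda>h. \<Sum>s<T. \<theta> 1 - \<theta> (fst (h ! s)))"
    by (rule integral_mono_AE) (use iY pw in \<open>auto simp: AE_measure_pmf_iff intro!: Bochner_Integration.integrable_sum cnt_integrable\<close>)
  finally show ?thesis using r by linarith
qed

lemma lb_other:
  assumes valid: "valid_policy K \<pi>" and th: "\<forall>i\<in>{1..K}. 0 \<le> \<theta> i \<and> \<theta> i \<le> 1"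
    and k: "k \<in> {1..K}" and opt: "\<forall>i\<in>{1..K}. i \<noteq> k \<longrightarrow> \<theta> i \<le> m" and mk: "m \<le> \<theta> k"
    and int: "integrable (measure_pmf \<delta>) (\<lambda>d. real d)"
  shows "(\<theta> k - m) * (real T - measure_pmf.expectation (hist \<pi> \<theta> \<delta> T) (cnt k T))
          - measure_pmf.expectation \<delta> (\<lambda>d. real d) \<le> regret K \<pi> \<theta> \<delta> T"
proof -
  let ?M = "hist \<pi> \<theta> \<delta> T"
  have r: "measure_pmf.expectation ?M (\<lambda>h. \<Sum>s<T. \<theta> k - \<theta> (fst (h ! s))) - measure_pmf.expectation \<delta> (\<lambda>d. real d)
      \<le> regret K \<pi> \<theta> \<delta> T" by (rule regret_lb[OF valid th k int])
  have pw: "(\<theta> k - m) * (real T - cnt k T h) \<le> (\<Sum>s<T. \<theta> k - \<theta> (fst (h ! s)))"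
    if h: "h \<in> set_pmf ?M" for h
  proof -
    have "(\<theta> k - m) * (real T - cnt k T h) = (\<Sum>s<T. (\<theta> k - m) * (1 - (if fst (h ! s) = k then 1 else 0)))"
      unfolding cnt_def sum_distrib_left[symmetric] by (simp add: sum_subtractf)
    also have "\<dots> \<le> (\<Sum>s<T. \<theta> k - \<theta> (fst (h ! s)))"
    proof (intro sum_mono)
      fix s assume "s \<in> {..<T}"
      then have "fst (h ! s) \<in> {1..K}" using hist_armsK[OF valid h] by auto
      then show "(\<theta> k - m) * (1 - (if fst (h ! s) = k then 1 else 0)) \<le> \<theta> k - \<theta> (fst (h ! s))"
        using opt by auto
    qed
    finally show ?thesis .
  qed
  have iY: "integrable (measure_pmf ?M) (\<lambda>h. \<Sum>s<T. \<theta> k - \<theta> (fst (h ! s)))"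
  proof (rule integrable_pmf_AE[where B=T])
    fix h assume h: "h \<in> set_pmf ?M"
    have "\<bar>\<Sum>s<T. \<theta> k - \<theta> (fst (h ! s))\<bar> \<le> (\<Sum>s<T. \<bar>\<theta> k - \<theta> (fst (h ! s))\<bar>)" by (rule sum_abs)
    also have "\<dots> \<le> (\<Sum>s<T. 1)"
    proof (intro sum_mono)
      fix s assume "s \<in> {..<T}"
      then have "fst (h ! s) \<in> {1..K}" using hist_armsK[OF valid h] by auto
      then show "\<bar>\<theta> k - \<theta> (fst (h ! s))\<bar> \<le> 1" using th k by (smt (verit, best))
    qed
    finally show "\<bar>\<Sum>s<T. \<theta> k - \<theta> (fst (h ! s))\<bar> \<le> real T" by simp
  qed
  have "(\<theta> k - m) * (real T - measure_pmf.expectation ?M (cnt k T))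
      = measure_pmf.expectation ?M (\<lambda>h. (\<theta> k - m) * (real T - cnt k T h))"
    using cnt_integrable[of ?M k T] by (simp add: Bochner_Integration.integral_diff)
  also have "\<dots> \<le> measure_pmf.expectation ?M (\<lambda>h. \<Sum>s<T. \<theta> k - \<theta> (fst (h ! s)))"
    by (rule integral_mono_AE) (use iY pw cnt_integrable[of ?M k T] in \<open>auto simp: AE_measure_pmf_iff\<close>)
  finally show ?thesis using r by linarith
qed



definition indE :: "nat \<Rightarrow> nat \<Rightarrow> history \<Rightarrow> real" where
  "indE k T h = (if cnt k T h \<le> real T / 2 then 1 else 0)"

lemma indE_integrable: "integrable (measure_pmf p) (indE k T)"
  by (rule integrable_pmf_bdd[where B=1]) (simp add: indE_def)

lemma E_affine_cnt:
  "measure_pmf.expectation p (\<lambda>h. a - b * cnt k T h) = a - b * measure_pmf.expectation p (cnt k T)"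
proof -
  have i: "integrable (measure_pmf p) (\<lambda>h. b * cnt k T h)" using cnt_integrable[of p k T] by simp
  have "measure_pmf.expectation p (\<lambda>h. a - b * cnt k T h) = measure_pmf.expectation p (\<lambda>_. a) - measure_pmf.expectation p (\<lambda>h. b * cnt k T h)"
    by (rule Bochner_Integration.integral_diff[OF integrable_pmf_bdd[of "\<lambda>_. a" "\<bar>a\<bar>"] i]) simp
  then show ?thesis by simp
qed

lemma P_lb:
  assumes T: "1 \<le> T"
  shows "1 - 2 * measure_pmf.expectation p (cnt k T) / real T \<le> measure_pmf.expectation p (indE k T)"
proof -
  have "measure_pmf.expectation p (\<lambda>h. 1 - (2 / real T) * cnt k T h) \<le> measure_pmf.expectation p (indE k T)"
  proof (rule integral_mono)
    show "integrable (measure_pmf p) (\<lambda>h. 1 - (2 / real T) * cnt k T h)"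
      using cnt_integrable[of p k T] by simp
    show "integrable (measure_pmf p) (indE k T)" by (rule indE_integrable)
    fix h
    show "1 - (2 / real T) * cnt k T h \<le> indE k T h"
    proof (cases "cnt k T h \<le> real T / 2")
      case True then show ?thesis using cnt_nonneg[of k T h] T by (simp add: indE_def)
    next
      case False
      then have "1 \<le> (2 / real T) * cnt k T h" using T by (simp add: field_simps)
      then show ?thesis using False by (simp add: indE_def)
    qed
  qed
  then show ?thesis unfolding E_affine_cnt by simp
qed

lemma Q_ub:
  assumes T: "1 \<le> T"
  shows "measure_pmf.expectation p (indE k T) \<le> 2 * (real T - measure_pmf.expectation p (cnt k T)) / real T"
proof -
  have "measure_pmf.expectation p (indE k T) \<le> measure_pmf.expectation p (\<lambda>h. 2 - (2 / real T) * cnt k T h)"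
  proof (rule integral_mono)
    show "integrable (measure_pmf p) (\<lambda>h. 2 - (2 / real T) * cnt k T h)"
      using cnt_integrable[of p k T] by simp
    show "integrable (measure_pmf p) (indE k T)" by (rule indE_integrable)
    fix h
    have c: "cnt k T h \<le> real T" by (rule cnt_le)
    show "indE k T h \<le> 2 - (2 / real T) * cnt k T h"
    proof (cases "cnt k T h \<le> real T / 2")
      case True
      then have "(2 / real T) * cnt k T h \<le> 1" using T by (simp add: field_simps)
      then show ?thesis using True by (simp add: indE_def)
    next
      case False
      have "(2 / real T) * cnt k T h \<le> 2" using c T by (simp add: field_simps)
      then show ?thesis using False by (simp add: indE_def)
    qed
  qed
  then show ?thesis unfolding E_affine_cnt using T by (simp add: field_simps)
qed

lemma com_T:
  assumes valid: "valid_policy K \<pi>" and th: "\<forall>i\<in>{1..K}. 0 \<le> \<theta> i \<and> \<theta> i \<le> 1"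
    and th': "\<forall>i\<in>{1..K}. 0 \<le> \<theta>' i \<and> \<theta>' i \<le> 1"
    and pk: "0 < \<theta> k" "\<theta> k < 1" and qk: "0 < \<theta>' k" "\<theta>' k < 1"
    and same: "\<And>i. i \<noteq> k \<Longrightarrow> \<theta>' i = \<theta> i"
    and q: "0 < q" and T: "1 \<le> T"
    and Qb: "2 * (real T - measure_pmf.expectation (hist \<pi> \<theta>' \<delta> T) (cnt k T)) / real T \<le> q"
  shows "measure_pmf.expectation (hist \<pi> \<theta> \<delta> T) (indE k T) * (- ln q) - ln 2
          \<le> kl_bern (\<theta> k) (\<theta>' k) * measure_pmf.expectation (hist \<pi> \<theta> \<delta> T) (cnt k T)"
proof -
  define lam where "lam = - ln q"
  define f where "f h = lam * indE k T h" for h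
  define Q where "Q = measure_pmf.expectation (hist \<pi> \<theta>' \<delta> T) (indE k T)"
  have fb: "\<bar>f h\<bar> \<le> \<bar>lam\<bar>" for h by (simp add: f_def indE_def)
  have g: "measure_pmf.expectation (hist \<pi> \<theta> \<delta> T) f
      - kl_bern (\<theta> k) (\<theta>' k) * measure_pmf.expectation (hist \<pi> \<theta> \<delta> T) (cnt k T)
      \<le> ln (measure_pmf.expectation (hist \<pi> \<theta>' \<delta> T) (\<lambda>h. exp (f h)))"
    by (rule gibbs[OF valid th th' pk qk same fb])
  have Ef: "measure_pmf.expectation (hist \<pi> \<theta> \<delta> T) f = lam * measure_pmf.expectation (hist \<pi> \<theta> \<delta> T) (indE k T)"
    unfolding f_def by simp
  have el: "exp lam = 1 / q" using q by (simp add: lam_def exp_minus inverse_eq_divide)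
  have pe: "exp (f h) = 1 + (1/q - 1) * indE k T h" for h
    by (simp add: f_def indE_def el)
  have Eexp: "measure_pmf.expectation (hist \<pi> \<theta>' \<delta> T) (\<lambda>h. exp (f h)) = 1 + (1/q - 1) * Q"
    unfolding pe Q_def using indE_integrable[of "hist \<pi> \<theta>' \<delta> T" k T]
    by (simp add: Bochner_Integration.integral_add)
  have Q01: "0 \<le> Q" "Q \<le> 1" unfolding Q_def using expectation_bounds[of 0 "indE k T" 1] by (auto simp: indE_def)
  have Qq: "Q \<le> q" using Q_ub[OF T, of "hist \<pi> \<theta>' \<delta> T" k] Qb unfolding Q_def by linarith
  have arg: "1 + (1/q - 1) * Q = (1 - Q) + Q / q" by (simp add: algebra_simps)
  have argpos: "0 < (1 - Q) + Q / q"
  proof (cases "Q = 1")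
    case True then show ?thesis using q by simp
  next
    case False then show ?thesis using Q01 q by (simp add: add_pos_nonneg)
  qed
  have "Q / q \<le> 1" using Qq q by simp
  then have "ln ((1 - Q) + Q / q) \<le> ln 2" using argpos Q01 by (subst ln_le_cancel_iff) auto
  then show ?thesis using g Ef Eexp arg unfolding lam_def by (simp add: algebra_simps)
qed



lemma kl_cont:
  assumes "0 < p" "p < 1" "0 < t" "t < 1"
  shows "isCont (kl_bern p) t"
  unfolding kl_bern_def using assms by (intro continuous_intros) auto

lemma lim_aux1: "0 < (a::real) \<Longrightarrow> ((\<lambda>T::nat. C / real T powr a) \<longlongrightarrow> 0) sequentially"
  by real_asymp

lemma lim_aux2: "filterlim (\<lambda>T::nat. ln (real T)) at_top sequentially"
  by real_asymp

lemma lim_aux3: "((\<lambda>T::nat. C / real T) \<longlongrightarrow> 0) sequentially"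
  by real_asymp

lemma per_arm:
  assumes K1: "1 \<le> K" and th: "\<forall>k\<in>{1..K}. 0 < \<theta> k \<and> \<theta> k < 1"
    and opt: "\<forall>k\<in>{1..K}. k \<noteq> 1 \<longrightarrow> \<theta> k < \<theta> 1"
    and int: "integrable (measure_pmf \<delta>) (\<lambda>d. real d)"
    and valid: "valid_policy K \<pi>" and ue: "uniformly_efficient K \<delta> \<pi>"
    and k: "k \<in> {1..K}" "k \<noteq> 1" and c: "c < 1 / kl_bern (\<theta> k) (\<theta> 1)"
  shows "eventually (\<lambda>T. c * ln (real T) \<le> measure_pmf.expectation (hist \<pi> \<theta> \<delta> T) (cnt k T)) sequentially"
proof -
  have Enn: "0 \<le> measure_pmf.expectation (hist \<pi> \<theta> \<delta> T) (cnt k T)" for T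
    by (rule Bochner_Integration.integral_nonneg) (rule cnt_nonneg)
  show ?thesis
  proof (cases "c \<le> 0")
    case True
    show ?thesis unfolding eventually_sequentially
    proof (intro exI allI impI)
      fix T :: nat assume "1 \<le> T"
      then have "0 \<le> ln (real T)" by simp
      then have "c * ln (real T) \<le> 0" using True by (simp add: mult_nonpos_nonneg)
      then show "c * ln (real T) \<le> measure_pmf.expectation (hist \<pi> \<theta> \<delta> T) (cnt k T)" using Enn[of T] by linarith
    qed
  next
    case False
    then have c0: "0 < c" by simp
    define p where "p = \<theta> k"
    define t1 where "t1 = \<theta> 1"
    have one: "(1::nat) \<in> {1..K}" using K1 by simp
    have p01: "0 < p" "p < 1" using th k by (auto simp: p_def)
    have t01: "0 < t1" "t1 < 1" using th one by (auto simp: t1_def)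
    have pt: "p < t1" using opt k by (auto simp: p_def t1_def)
    have kl1: "0 < kl_bern p t1" using p01 t01 pt by (intro kl_pos) auto
    have ck1: "c * kl_bern p t1 < 1" using c kl1 by (simp add: p_def t1_def field_simps)
    have "((\<lambda>y. c * kl_bern p y) \<longlongrightarrow> c * kl_bern p t1) (at t1)"
      using kl_cont[OF p01 t01] by (intro tendsto_mult_left) (simp add: isCont_def)
    then have "eventually (\<lambda>y. c * kl_bern p y < 1) (at t1)"
      using ck1 by (rule order_tendstoD(2))
    then obtain d where d: "d > 0" and dP: "\<And>y. y \<noteq> t1 \<Longrightarrow> dist y t1 < d \<Longrightarrow> c * kl_bern p y < 1"
      unfolding eventually_at by auto
    define x where "x = t1 + min d (1 - t1) / 2"
    have x1: "t1 < x" "x < 1" using d t01 by (auto simp: x_def min_def field_simps)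
    have x0: "0 < x" using x1 t01 by simp
    have "dist x t1 < d" using d t01 by (auto simp: x_def dist_real_def min_def)
    then have r1: "c * kl_bern p x < 1" using x1 by (intro dP) auto
    have klx: "0 < kl_bern p x" using p01 x1 pt by (intro kl_pos) auto
    define r where "r = c * kl_bern p x"
    have r01: "0 < r" "r < 1" using c0 klx r1 by (auto simp: r_def)
    define \<alpha> where "\<alpha> = (1 - r) / 4"
    have a01: "0 < \<alpha>" "\<alpha> < 1" using r01 by (auto simp: \<alpha>_def)
    define \<theta>' where "\<theta>' = \<theta>(k := x)"
    have th0: "\<forall>i\<in>{1..K}. 0 \<le> \<theta> i \<and> \<theta> i \<le> 1" using th by auto
    have th0': "\<forall>i\<in>{1..K}. 0 \<le> \<theta>' i \<and> \<theta>' i \<le> 1" using th x0 x1 by (auto simp: \<theta>'_def)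
    have same: "\<And>i. i \<noteq> k \<Longrightarrow> \<theta>' i = \<theta> i" by (simp add: \<theta>'_def)
    define \<mu> where "\<mu> = measure_pmf.expectation \<delta> (\<lambda>d. real d)"
    define R where "R T = regret K \<pi> \<theta> \<delta> T" for T
    define R' where "R' T = regret K \<pi> \<theta>' \<delta> T" for T
    have R1: "((\<lambda>T. R T / real T powr (1/2)) \<longlongrightarrow> 0) sequentially"
      using ue th0 unfolding uniformly_efficient_def R_def by auto
    have R2: "((\<lambda>T. R' T / real T powr \<alpha>) \<longlongrightarrow> 0) sequentially"
      using ue th0' a01 unfolding uniformly_efficient_def R'_def by auto
    have B1: "(t1 - p) * measure_pmf.expectation (hist \<pi> \<theta> \<delta> T) (cnt k T) \<le> R T + \<mu>" for T
    proof -
      have optl: "\<forall>j\<in>{1..K}. \<theta> j \<le> \<theta> 1" using opt by (metis order.strict_implies_order order_refl)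
      have ls: "(\<Sum>j\<in>{1..K} - {1}. (\<theta> 1 - \<theta> j) * measure_pmf.expectation (hist \<pi> \<theta> \<delta> T) (cnt j T)) - \<mu> \<le> R T"
        unfolding R_def \<mu>_def by (rule lb_sum[OF valid th0 optl K1 int])
      have "(\<theta> 1 - \<theta> k) * measure_pmf.expectation (hist \<pi> \<theta> \<delta> T) (cnt k T)
          \<le> (\<Sum>j\<in>{1..K} - {1}. (\<theta> 1 - \<theta> j) * measure_pmf.expectation (hist \<pi> \<theta> \<delta> T) (cnt j T))"
      proof (rule member_le_sum)
        show "k \<in> {1..K} - {1}" using k by auto
        fix j assume "j \<in> {1..K} - {1} - {k}"
        then show "0 \<le> (\<theta> 1 - \<theta> j) * measure_pmf.expectation (hist \<pi> \<theta> \<delta> T) (cnt j T)"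
          using optl by (intro mult_nonneg_nonneg Bochner_Integration.integral_nonneg cnt_nonneg) auto
      qed simp
      then show ?thesis using ls by (simp add: p_def t1_def)
    qed
    have B2: "(x - t1) * (real T - measure_pmf.expectation (hist \<pi> \<theta>' \<delta> T) (cnt k T)) \<le> R' T + \<mu>" for T
    proof -
      have o: "\<forall>i\<in>{1..K}. i \<noteq> k \<longrightarrow> \<theta>' i \<le> t1"
        using opt by (auto simp: \<theta>'_def t1_def less_imp_le)
      have "(\<theta>' k - t1) * (real T - measure_pmf.expectation (hist \<pi> \<theta>' \<delta> T) (cnt k T)) - \<mu> \<le> R' T"
        unfolding R'_def \<mu>_def by (rule lb_other[OF valid th0' k(1) o _ int]) (use x1 in \<open>simp add: \<theta>'_def\<close>)
      then show ?thesis by (simp add: \<theta>'_def)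
    qed
    have h1: "((\<lambda>T::nat. 1 / real T powr (1/2)) \<longlongrightarrow> 0) sequentially" by (rule lim_aux1) simp
    have LA: "((\<lambda>T. (R T + \<mu>) / real T) \<longlongrightarrow> 0) sequentially"
    proof -
      have "((\<lambda>T. R T / real T powr (1/2) * (1 / real T powr (1/2)) + \<mu> / real T) \<longlongrightarrow> 0 * 0 + 0) sequentially"
        by (intro tendsto_add tendsto_mult R1 h1 lim_aux3)
      moreover have "eventually (\<lambda>T. R T / real T powr (1/2) * (1 / real T powr (1/2)) + \<mu> / real T = (R T + \<mu>) / real T) sequentially"
        unfolding eventually_sequentially
      proof (intro exI allI impI)
        fix T :: nat assume T: "1 \<le> T"
        have "real T powr (1/2) * real T powr (1/2) = real T" using T by (simp flip: powr_add)
        then show "R T / real T powr (1/2) * (1 / real T powr (1/2)) + \<mu> / real T = (R T + \<mu>) / real T"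
          by (simp add: add_divide_distrib)
      qed
      ultimately show ?thesis by (simp add: tendsto_cong)
    qed
    have LB: "((\<lambda>T. (R' T + \<mu> + 1) / real T powr \<alpha>) \<longlongrightarrow> 0) sequentially"
    proof -
      have "((\<lambda>T. R' T / real T powr \<alpha> + (\<mu> + 1) / real T powr \<alpha>) \<longlongrightarrow> 0 + 0) sequentially"
        by (intro tendsto_add R2 lim_aux1 a01)
      then show ?thesis by (simp add: add_divide_distrib add.assoc)
    qed
    have gp: "0 < (t1 - p) * \<alpha> / 2" using pt a01 by simp
    have EA: "eventually (\<lambda>T. (R T + \<mu>) / real T < (t1 - p) * \<alpha> / 2) sequentially"
      by (rule order_tendstoD(2)[OF LA gp])
    have EB: "eventually (\<lambda>T. (R' T + \<mu> + 1) / real T powr \<alpha> < (x - t1) / 2) sequentially"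
      by (rule order_tendstoD(2)[OF LB]) (use x1 in simp)
    have EC: "eventually (\<lambda>T. ln 2 / ((1 - r) / 2) \<le> ln (real T)) sequentially"
      using lim_aux2 unfolding filterlim_at_top by blast
    have ED: "eventually (\<lambda>T. 1 \<le> T) sequentially" by (rule eventually_ge_at_top)
    show ?thesis
    proof (rule eventually_mono[OF eventually_conj[OF EA eventually_conj[OF EB eventually_conj[OF EC ED]]]])
      fix T :: nat
      assume A: "(R T + \<mu>) / real T < (t1 - p) * \<alpha> / 2 \<and> (R' T + \<mu> + 1) / real T powr \<alpha> < (x - t1) / 2
          \<and> ln 2 / ((1 - r) / 2) \<le> ln (real T) \<and> 1 \<le> T"
      then have T: "1 \<le> T" and ea: "(R T + \<mu>) / real T < (t1 - p) * \<alpha> / 2"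
        and eb: "(R' T + \<mu> + 1) / real T powr \<alpha> < (x - t1) / 2"
        and ec: "ln 2 / ((1 - r) / 2) \<le> ln (real T)" by auto
      have Tp: "0 < real T" using T by simp
      define E where "E = measure_pmf.expectation (hist \<pi> \<theta> \<delta> T) (cnt k T)"
      define E' where "E' = measure_pmf.expectation (hist \<pi> \<theta>' \<delta> T) (cnt k T)"
      define P where "P = measure_pmf.expectation (hist \<pi> \<theta> \<delta> T) (indE k T)"
      have E'le: "E' \<le> real T" unfolding E'_def
        using expectation_bounds[of 0 "cnt k T" "real T"] cnt_nonneg cnt_le by blast
      have b2: "(x - t1) * (real T - E') \<le> R' T + \<mu>" using B2[of T] by (simp add: E'_def)
      have nn: "0 \<le> (x - t1) * (real T - E')" using x1 E'le by simp
      define q where "q = 2 * (R' T + \<mu> + 1) / ((x - t1) * real T)"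
      have q0: "0 < q" unfolding q_def using nn b2 x1 Tp by (intro divide_pos_pos) auto
      have Qb: "2 * (real T - E') / real T \<le> q"
      proof -
        have "real T - E' \<le> (R' T + \<mu> + 1) / (x - t1)" using b2 x1 by (simp add: field_simps)
        then have "2 * (real T - E') / real T \<le> 2 * ((R' T + \<mu> + 1) / (x - t1)) / real T"
          using Tp by (intro divide_right_mono mult_left_mono) auto
        also have "\<dots> = q" unfolding q_def by simp
        finally show ?thesis .
      qed
      have Tpa: "0 < real T powr \<alpha>" using Tp by simp
      have qT: "q \<le> real T powr (\<alpha> - 1)"
      proof -
        have "2 * (R' T + \<mu> + 1) \<le> (x - t1) * real T powr \<alpha>" using eb Tpa by (simp add: field_simps)
        then have "q \<le> (x - t1) * real T powr \<alpha> / ((x - t1) * real T)" unfolding q_def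
          using x1 Tp by (intro divide_right_mono) auto
        also have "\<dots> = real T powr \<alpha> / real T" using x1 by simp
        also have "\<dots> = real T powr (\<alpha> - 1)" using Tp by (simp add: powr_diff)
        finally show ?thesis .
      qed
      have lnq: "(1 - \<alpha>) * ln (real T) \<le> - ln q"
      proof -
        have "ln q \<le> ln (real T powr (\<alpha> - 1))" using qT q0 Tp by (subst ln_le_cancel_iff) auto
        also have "\<dots> = (\<alpha> - 1) * ln (real T)" using Tp by (simp add: ln_powr)
        finally show ?thesis by (simp add: algebra_simps)
      qed
      have Pb: "1 - \<alpha> \<le> P"
      proof -
        have b1: "(t1 - p) * E \<le> R T + \<mu>" using B1[of T] by (simp add: E_def)
        have "(t1 - p) * E / real T < (t1 - p) * \<alpha> / 2" using b1 ea Tp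
          by (smt (verit, best) divide_right_mono)
        then have "(t1 - p) * (E / real T) < (t1 - p) * (\<alpha> / 2)" by simp
        then have "E / real T < \<alpha> / 2" using pt by (meson mult_less_cancel_left_pos diff_gt_0_iff_gt)
        then have "2 * E / real T < \<alpha>" by (simp add: mult.commute)
        moreover have "1 - 2 * E / real T \<le> P" unfolding P_def E_def by (rule P_lb[OF T])
        ultimately show ?thesis by linarith
      qed
      have thk: "\<theta>' k = x" by (simp add: \<theta>'_def)
      have com: "P * (- ln q) - ln 2 \<le> kl_bern (\<theta> k) (\<theta>' k) * E"
        unfolding P_def E_def
        by (rule com_T[OF valid th0 th0' _ _ _ _ same q0 T]) (use p01 x0 x1 Qb thk in \<open>auto simp: p_def E'_def\<close>)
      have klx': "kl_bern (\<theta> k) (\<theta>' k) = kl_bern p x" by (simp add: p_def \<theta>'_def)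
      have lnT: "0 \<le> ln (real T)" using T by simp
      have m1: "(1 - \<alpha>) * (1 - \<alpha>) * ln (real T) \<le> P * (- ln q)"
        using mult_mono[OF Pb lnq] a01 lnT Pb by (simp add: mult.assoc)
      have m2: "(1 + r) / 2 \<le> (1 - \<alpha>) * (1 - \<alpha>)"
      proof -
        have "(1 - \<alpha>) * (1 - \<alpha>) = (1 + r) / 2 + \<alpha> * \<alpha>" unfolding \<alpha>_def by (simp add: field_simps)
        moreover have "0 \<le> \<alpha> * \<alpha>" by simp
        ultimately show ?thesis by linarith
      qed
      have A1: "(1 + r) / 2 * ln (real T) \<le> P * (- ln q)"
        using order_trans[OF mult_right_mono[OF m2 lnT] m1] .
      have C1: "ln 2 \<le> (1 - r) / 2 * ln (real T)" using ec r01 by (simp add: field_simps)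
      have B1': "P * (- ln q) - ln 2 \<le> kl_bern p x * E" using com klx' by simp
      have eqr: "r * ln (real T) = (1 + r) / 2 * ln (real T) - (1 - r) / 2 * ln (real T)"
        by (simp add: field_simps)
      have "r * ln (real T) \<le> kl_bern p x * E"
        using A1 C1 B1' eqr by linarith
      then have "kl_bern p x * (c * ln (real T)) \<le> kl_bern p x * E" unfolding r_def by (simp add: algebra_simps)
      then show "c * ln (real T) \<le> measure_pmf.expectation (hist \<pi> \<theta> \<delta> T) (cnt k T)"
        using klx unfolding E_def by simp
    qed
  qed
qed



lemma lim_aux4: "((\<lambda>T::nat. C / ln (real T)) \<longlongrightarrow> 0) sequentially"
  by real_asymp

theorem theorem4:
  fixes K :: nat and \<theta> :: "nat \<Rightarrow> real" and \<delta> :: "nat pmf" and \<pi> :: policy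
  assumes "1 \<le> K"
    and "\<forall>k\<in>{1..K}. 0 < \<theta> k \<and> \<theta> k < 1"
    and "\<forall>k\<in>{1..K}. k \<noteq> 1 \<longrightarrow> \<theta> k < \<theta> 1"
    and "integrable (measure_pmf \<delta>) (\<lambda>d. real d)"
    and "valid_policy K \<pi>"
    and "uniformly_efficient K \<delta> \<pi>"
  shows "ereal (\<Sum>k\<in>{1..K} - {1}. (\<theta> 1 - \<theta> k) / kl_bern (\<theta> k) (\<theta> 1))
           \<le> liminf (\<lambda>T. ereal (regret K \<pi> \<theta> \<delta> T / ln (real T)))"
proof -
  note K1 = assms(1) and th = assms(2) and opt = assms(3) and int = assms(4) and valid = assms(5) and ue = assms(6)
  define KS where "KS = {1..K} - {1::nat}"
  define S where "S = (\<Sum>k\<in>KS. (\<theta> 1 - \<theta> k) / kl_bern (\<theta> k) (\<theta> 1))"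
  define G where "G = (\<Sum>k\<in>KS. \<theta> 1 - \<theta> k)"
  define \<mu> where "\<mu> = measure_pmf.expectation \<delta> (\<lambda>d. real d)"
  have one: "(1::nat) \<in> {1..K}" using K1 by simp
  have th0: "\<forall>i\<in>{1..K}. 0 \<le> \<theta> i \<and> \<theta> i \<le> 1" using th by auto
  have optl: "\<forall>j\<in>{1..K}. \<theta> j \<le> \<theta> 1" using opt by (metis order.strict_implies_order order_refl)
  have gap0: "0 \<le> \<theta> 1 - \<theta> k" if "k \<in> KS" for k using optl that by (auto simp: KS_def)
  have G0: "0 \<le> G" unfolding G_def by (intro sum_nonneg gap0)
  have main: "ereal (S - e) \<le> liminf (\<lambda>T. ereal (regret K \<pi> \<theta> \<delta> T / ln (real T)))" if e: "0 < e" for e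
  proof (rule Liminf_bounded)
    define \<eta> where "\<eta> = e / (2 * (G + 1))"
    have \<eta>0: "0 < \<eta>" using e G0 by (simp add: \<eta>_def)
    have \<eta>G: "\<eta> * G \<le> e / 2"
    proof -
      have "\<eta> * G \<le> \<eta> * (G + 1)" using \<eta>0 by simp
      also have "\<dots> = e / 2" using G0 by (simp add: \<eta>_def field_simps)
      finally show ?thesis .
    qed
    have E1: "eventually (\<lambda>T. \<forall>k\<in>KS. (1 / kl_bern (\<theta> k) (\<theta> 1) - \<eta>) * ln (real T)
                 \<le> measure_pmf.expectation (hist \<pi> \<theta> \<delta> T) (cnt k T)) sequentially"
      unfolding KS_def
    proof (rule eventually_ball_finite)
      show "finite ({1..K} - {1::nat})" by simp
      show "\<forall>k\<in>{1..K} - {1}. eventually (\<lambda>T. (1 / kl_bern (\<theta> k) (\<theta> 1) - \<eta>) * ln (real T)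
                 \<le> measure_pmf.expectation (hist \<pi> \<theta> \<delta> T) (cnt k T)) sequentially"
        using \<eta>0 by (auto intro!: per_arm[OF K1 th opt int valid ue])
    qed
    have E2: "eventually (\<lambda>T. \<mu> / ln (real T) < e / 2) sequentially"
      using e by (intro order_tendstoD(2)[OF lim_aux4]) auto
    have E3: "eventually (\<lambda>T. 2 \<le> T) sequentially" by (rule eventually_ge_at_top)
    show "eventually (\<lambda>T. ereal (S - e) \<le> ereal (regret K \<pi> \<theta> \<delta> T / ln (real T))) sequentially"
    proof (rule eventually_mono[OF eventually_conj[OF E1 eventually_conj[OF E2 E3]]])
      fix T :: nat
      assume A: "(\<forall>k\<in>KS. (1 / kl_bern (\<theta> k) (\<theta> 1) - \<eta>) * ln (real T)
                 \<le> measure_pmf.expectation (hist \<pi> \<theta> \<delta> T) (cnt k T)) \<and> \<mu> / ln (real T) < e / 2 \<and> 2 \<le> T"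
      have lnT: "0 < ln (real T)" using A by simp
      have ls: "(\<Sum>k\<in>KS. (\<theta> 1 - \<theta> k) * measure_pmf.expectation (hist \<pi> \<theta> \<delta> T) (cnt k T)) - \<mu> \<le> regret K \<pi> \<theta> \<delta> T"
        unfolding KS_def \<mu>_def by (rule lb_sum[OF valid th0 optl K1 int])
      have "(\<Sum>k\<in>KS. (\<theta> 1 - \<theta> k) * ((1 / kl_bern (\<theta> k) (\<theta> 1) - \<eta>) * ln (real T)))
          \<le> (\<Sum>k\<in>KS. (\<theta> 1 - \<theta> k) * measure_pmf.expectation (hist \<pi> \<theta> \<delta> T) (cnt k T))"
        using A gap0 by (intro sum_mono mult_left_mono) auto
      also have "(\<Sum>k\<in>KS. (\<theta> 1 - \<theta> k) * ((1 / kl_bern (\<theta> k) (\<theta> 1) - \<eta>) * ln (real T)))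
          = (S - \<eta> * G) * ln (real T)"
      proof -
        have "(\<Sum>k\<in>KS. (\<theta> 1 - \<theta> k) * ((1 / kl_bern (\<theta> k) (\<theta> 1) - \<eta>) * ln (real T)))
            = (\<Sum>k\<in>KS. (\<theta> 1 - \<theta> k) / kl_bern (\<theta> k) (\<theta> 1) * ln (real T) - (\<eta> * ln (real T)) * (\<theta> 1 - \<theta> k))"
          by (intro sum.cong refl) (simp add: algebra_simps)
        also have "\<dots> = S * ln (real T) - (\<eta> * ln (real T)) * G"
        proof -
          have a: "(\<Sum>k\<in>KS. (\<eta> * ln (real T)) * (\<theta> 1 - \<theta> k)) = (\<eta> * ln (real T)) * G"
            unfolding G_def by (rule sum_distrib_left[symmetric])
          have b: "(\<Sum>k\<in>KS. (\<theta> 1 - \<theta> k) / kl_bern (\<theta> k) (\<theta> 1) * ln (real T)) = S * ln (real T)"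
            unfolding S_def by (rule sum_distrib_right[symmetric])
          show ?thesis unfolding sum_subtractf a b ..
        qed
        finally show ?thesis by (simp add: algebra_simps)
      qed
      finally have "(S - \<eta> * G) * ln (real T) - \<mu> \<le> regret K \<pi> \<theta> \<delta> T" using ls by linarith
      then have "((S - \<eta> * G) * ln (real T) - \<mu>) / ln (real T) \<le> regret K \<pi> \<theta> \<delta> T / ln (real T)"
        using lnT by (intro divide_right_mono) auto
      moreover have "((S - \<eta> * G) * ln (real T) - \<mu>) / ln (real T) = S - \<eta> * G - \<mu> / ln (real T)"
        using lnT by (simp add: field_simps)
      ultimately have "S - e \<le> regret K \<pi> \<theta> \<delta> T / ln (real T)" using A \<eta>G by linarith
      then show "ereal (S - e) \<le> ereal (regret K \<pi> \<theta> \<delta> T / ln (real T))" by simp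
    qed
  qed
  show ?thesis
  proof (rule ereal_le_epsilon2)
    fix e :: real assume e: "0 < e"
    have "ereal S = ereal (S - e) + ereal e" by simp
    also have "\<dots> \<le> liminf (\<lambda>T. ereal (regret K \<pi> \<theta> \<delta> T / ln (real T))) + ereal e"
      using main[OF e] by (rule add_right_mono)
    finally show "ereal (\<Sum>k\<in>{1..K} - {1}. (\<theta> 1 - \<theta> k) / kl_bern (\<theta> k) (\<theta> 1))
        \<le> liminf (\<lambda>T. ereal (regret K \<pi> \<theta> \<delta> T / ln (real T))) + ereal e"
      unfolding S_def KS_def .
  qed
qed

end
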